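(* Let $G=(V,E)$ be a simple directed acyclic graph with capacities $C\in\mathbb{R}_{\ge0}^E$, $s,t\in V$ with a directed $s$-$t$ path, and budget $\gamma$ with $0<\gamma\le\min_{e\in E}C(e)$. For any interdiction strategy $w$ there exists an interdiction strategy $w'$ which is a probability distribution on the set of single-path flows (in $\mathcal{F}_{\le\gamma}$) such that $\Lambda(w',P)\ge\Lambda(w,P)$ for every set of user paths $P$.
   Context: An $s$-$t$ flow is a vector $\mathbf{f}\in\mathbb{R}^E$ with $0\le\mathbf{f}(e)\le C(e)$ for all $e$ and flow conservation at every $v\in V\setminus\{s,t\}$; its value is $val(\mathbf{f})=\sum_{(s,u)\in E}\mathbf{f}(s,u)$. $\mathcal{F}_{\le\gamma}$ denotes the set of $s$-$t$ flows of value at most $\gamma$. An interdiction strategy is a (finitely supported) probability distribution $w$ on $\mathcal{F}_{\le\gamma}$. A single-path flow is an $s$-$t$ flow whose positive entries all lie on the edges of one directed $s$-$t$ path. A set of user paths is a set $P=\{p_1,\dots,p_k\}$ of directed paths in $G$ (viewed as edge sets, not necessarily disjoint or with common endpoints) with initial flow values $\lambda_i\ge0$ such that $\sum_{i:e\in p_i}\lambda_i\le C(e)$ for all $e$. For an $s$-$t$ flow $\mathbf{f}$, $T(\mathbf{f},P)$ is the optimal value of: maximize $\sum_i\tilde\lambda_i$ s.t. $\sum_{i:e\in p_i}\tilde\lambda_i\le C(e)-\mathbf{f}(e)$ for all $e$, $0\le\tilde\lambda_i\le\lambda_i$. Define $\Lambda(\mathbf{f},P)=\sum_i\lambda_i-T(\mathbf{f},P)$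 and $\Lambda(w,P)=\sum_{\mathbf{f}}w(\mathbf{f})\Lambda(\mathbf{f},P)$. *)

theory Defs
  imports Complex_Main
begin

type_synonym 'v edge = "'v \<times> 'v"
type_synonym 'v flowvec = "'v edge \<Rightarrow> real"

text \<open>Simple directed acyclic graph: finite vertex set V, edge set E \<subseteq> V \<times> V
  (a set of ordered pairs, hence no parallel edges), no loops, no directed cycle.\<close>
definition simple_dag :: "'v set \<Rightarrow> 'v edge set \<Rightarrow> bool" where
  "simple_dag V E \<longleftrightarrow> finite V \<and> E \<subseteq> V \<times> V \<and> (\<forall>v. (v, v) \<notin> E) \<and> (\<forall>v. (v, v) \<notin> E\<^sup>+)"

definition path_edges :: "'v list \<Rightarrow> 'v edge set" where
  "path_edges xs = set (zip xs (tl xs))"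

definition is_dpath :: "'v set \<Rightarrow> 'v edge set \<Rightarrow> 'v list \<Rightarrow> bool" where
  "is_dpath V E xs \<longleftrightarrow> xs \<noteq> [] \<and> distinct xs \<and> set xs \<subseteq> V \<and> path_edges xs \<subseteq> E"

definition is_st_path :: "'v set \<Rightarrow> 'v edge set \<Rightarrow> 'v \<Rightarrow> 'v \<Rightarrow> 'v list \<Rightarrow> bool" where
  "is_st_path V E s t xs \<longleftrightarrow> is_dpath V E xs \<and> hd xs = s \<and> last xs = t"

definition is_st_flow ::
  "'v set \<Rightarrow> 'v edge set \<Rightarrow> ('v edge \<Rightarrow> real) \<Rightarrow> 'v \<Rightarrow> 'v \<Rightarrow> 'v flowvec \<Rightarrow> bool" where
  "is_st_flow V E C s t f \<longleftrightarrow>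
     (\<forall>e. e \<notin> E \<longrightarrow> f e = 0) \<and>
     (\<forall>e\<in>E. 0 \<le> f e \<and> f e \<le> C e) \<and>
     (\<forall>v\<in>V - {s, t}. (\<Sum>e\<in>{e\<in>E. snd e = v}. f e) = (\<Sum>e\<in>{e\<in>E. fst e = v}. f e))"

definition flow_val :: "'v edge set \<Rightarrow> 'v \<Rightarrow> 'v flowvec \<Rightarrow> real" where
  "flow_val E s f = (\<Sum>e\<in>{e\<in>E. fst e = s}. f e)"

definition flows_le ::
  "'v set \<Rightarrow> 'v edge set \<Rightarrow> ('v edge \<Rightarrow> real) \<Rightarrow> 'v \<Rightarrow> 'v \<Rightarrow> real \<Rightarrow> 'v flowvec set" where
  "flows_le V E C s t \<gamma> = {f. is_st_flow V E C s t f \<and> flow_val E s f \<le> \<gamma>}"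

definition single_path_flow ::
  "'v set \<Rightarrow> 'v edge set \<Rightarrow> ('v edge \<Rightarrow> real) \<Rightarrow> 'v \<Rightarrow> 'v \<Rightarrow> 'v flowvec \<Rightarrow> bool" where
  "single_path_flow V E C s t f \<longleftrightarrow> is_st_flow V E C s t f \<and>
     (\<exists>p. is_st_path V E s t p \<and> (\<forall>e. f e > 0 \<longrightarrow> e \<in> path_edges p))"

definition fin_distr_on :: "('a \<Rightarrow> real) \<Rightarrow> 'a set \<Rightarrow> bool" where
  "fin_distr_on w S \<longleftrightarrow> finite {x. w x \<noteq> 0} \<and> (\<forall>x. 0 \<le> w x) \<and>
     {x. w x \<noteq> 0} \<subseteq> S \<and> (\<Sum>x\<in>{x. w x \<noteq> 0}. w x) = 1"

definition interdiction_strategy ::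
  "'v set \<Rightarrow> 'v edge set \<Rightarrow> ('v edge \<Rightarrow> real) \<Rightarrow> 'v \<Rightarrow> 'v \<Rightarrow> real \<Rightarrow> ('v flowvec \<Rightarrow> real) \<Rightarrow> bool" where
  "interdiction_strategy V E C s t \<gamma> w \<longleftrightarrow> fin_distr_on w (flows_le V E C s t \<gamma>)"

definition user_paths ::
  "'v set \<Rightarrow> 'v edge set \<Rightarrow> ('v edge \<Rightarrow> real) \<Rightarrow> nat \<Rightarrow> (nat \<Rightarrow> 'v list) \<Rightarrow> (nat \<Rightarrow> real) \<Rightarrow> bool" where
  "user_paths V E C k p lam \<longleftrightarrow>
     (\<forall>i<k. is_dpath V E (p i) \<and> 0 \<le> lam i) \<and>
     inj_on (\<lambda>i. path_edges (p i)) {..<k} \<and>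
     (\<forall>e\<in>E. (\<Sum>i\<in>{i. i < k \<and> e \<in> path_edges (p i)}. lam i) \<le> C e)"

text \<open>T(f,P): optimal value of the LP maximising the remaining user flow.\<close>
definition T_val ::
  "'v edge set \<Rightarrow> ('v edge \<Rightarrow> real) \<Rightarrow> nat \<Rightarrow> (nat \<Rightarrow> 'v list) \<Rightarrow> (nat \<Rightarrow> real) \<Rightarrow> 'v flowvec \<Rightarrow> real" where
  "T_val E C k p lam f = Sup {(\<Sum>i<k. lt i) | lt.
      (\<forall>e\<in>E. (\<Sum>i\<in>{i. i < k \<and> e \<in> path_edges (p i)}. lt i) \<le> C e - f e) \<and>
      (\<forall>i<k. 0 \<le> lt i \<and> lt i \<le> lam i)}"

definition Lambda_flow ::
  "'v edge set \<Rightarrow> ('v edge \<Rightarrow> real) \<Rightarrow> nat \<Rightarrow> (nat \<Rightarrow> 'v list) \<Rightarrow> (nat \<Rightarrow> real) \<Rightarrow> 'v flowvec \<Rightarrow> real" where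
  "Lambda_flow E C k p lam f = (\<Sum>i<k. lam i) - T_val E C k p lam f"

definition Lambda_strat ::
  "'v edge set \<Rightarrow> ('v edge \<Rightarrow> real) \<Rightarrow> nat \<Rightarrow> (nat \<Rightarrow> 'v list) \<Rightarrow> (nat \<Rightarrow> real) \<Rightarrow> ('v flowvec \<Rightarrow> real) \<Rightarrow> real" where
  "Lambda_strat E C k p lam w = (\<Sum>f\<in>{f. w f \<noteq> 0}. w f * Lambda_flow E C k p lam f)"

end

theory Submission
  imports Defs
begin


definition chi :: "'v list \<Rightarrow> 'v flowvec" where
  "chi xs e = of_bool (e \<in> path_edges xs)"

definition outs :: "'v edge set \<Rightarrow> 'v flowvec \<Rightarrow> 'v \<Rightarrow> real" where
  "outs E f v = (\<Sum>e\<in>{e\<in>E. fst e = v}. f e)"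
definition ins :: "'v edge set \<Rightarrow> 'v flowvec \<Rightarrow> 'v \<Rightarrow> real" where
  "ins E f v = (\<Sum>e\<in>{e\<in>E. snd e = v}. f e)"

definition flowish :: "'v set \<Rightarrow> 'v edge set \<Rightarrow> 'v \<Rightarrow> 'v \<Rightarrow> 'v flowvec \<Rightarrow> bool" where
  "flowish V E s t f \<longleftrightarrow> (\<forall>e. e \<notin> E \<longrightarrow> f e = 0) \<and> (\<forall>e\<in>E. 0 \<le> f e) \<and>
     (\<forall>v\<in>V - {s, t}. ins E f v = outs E f v)"

lemma path_edges_Cons:
  "path_edges (x # xs) = (if xs = [] then {} else insert (x, hd xs) (path_edges xs))"
  by (cases xs) (auto simp: path_edges_def)

lemma finite_path_edges[simp]: "finite (path_edges xs)"
  by (simp add: path_edges_def)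

lemma path_edges_subset: "path_edges xs \<subseteq> set xs \<times> set xs"
  unfolding path_edges_def by (cases xs) (auto dest: set_zip_leftD set_zip_rightD)

lemma card_in:
  "distinct xs \<Longrightarrow> card {e\<in>path_edges xs. snd e = v} = (if v \<in> set xs \<and> v \<noteq> hd xs then 1 else 0)"
proof (induction xs)
  case Nil
  then show ?case by (simp add: path_edges_def)
next
  case (Cons x xs)
  show ?case
  proof (cases "xs = []")
    case True
    then show ?thesis by (simp add: path_edges_def)
  next
    case False
    have eq: "{e\<in>path_edges (x#xs). snd e = v} =
      (if hd xs = v then {(x,v)} else {}) \<union> {e\<in>path_edges xs. snd e = v}"
      using False by (auto simp: path_edges_Cons)
    show ?thesis
    proof (cases "hd xs = v")
      case True
      have "card {e\<in>path_edges xs. snd e = v} = 0" using Cons True by simp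
      then have "{e\<in>path_edges xs. snd e = v} = {}" by simp
      then have "{e\<in>path_edges (x#xs). snd e = v} = {(x,v)}" using eq True by auto
      moreover have "v \<in> set xs" using True False by auto
      ultimately show ?thesis using Cons.prems by auto
    next
      case f2: False
      then show ?thesis using eq Cons by auto
    qed
  qed
qed

lemma card_out:
  "distinct xs \<Longrightarrow> card {e\<in>path_edges xs. fst e = v} = (if v \<in> set xs \<and> v \<noteq> last xs then 1 else 0)"
proof (induction xs)
  case Nil
  then show ?case by (simp add: path_edges_def)
next
  case (Cons x xs)
  show ?case
  proof (cases "xs = []")
    case True
    then show ?thesis by (simp add: path_edges_def)
  next
    case False
    have eq: "{e\<in>path_edges (x#xs). fst e = v} =
      (if x = v then {(x,hd xs)} else {}) \<union> {e\<in>path_edges xs. fst e = v}"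
      using False by (auto simp: path_edges_Cons)
    show ?thesis
    proof (cases "x = v")
      case True
      have "{e\<in>path_edges xs. fst e = v} = {}" using path_edges_subset[of xs] Cons.prems True by auto
      then have "{e\<in>path_edges (x#xs). fst e = v} = {(x,hd xs)}" using eq True by auto
      moreover have "last xs \<in> set xs" using False by simp
      ultimately show ?thesis using True Cons.prems False by auto
    next
      case f2: False
      then show ?thesis using eq Cons False by auto
    qed
  qed
qed

lemma sum_chi_in:
  assumes "finite E" "path_edges p \<subseteq> E"
  shows "ins E (chi p) v = card {e\<in>path_edges p. snd e = v}"
proof -
  have "ins E (chi p) v = card ({e\<in>E. snd e = v} \<inter> {e. e \<in> path_edges p})"
    unfolding ins_def chi_def using assms by simp
  also have "{e\<in>E. snd e = v} \<inter> {e. e \<in> path_edges p} = {e\<in>path_edges p. snd e = v}"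
    using assms by auto
  finally show ?thesis .
qed

lemma sum_chi_out:
  assumes "finite E" "path_edges p \<subseteq> E"
  shows "outs E (chi p) v = card {e\<in>path_edges p. fst e = v}"
proof -
  have "outs E (chi p) v = card ({e\<in>E. fst e = v} \<inter> {e. e \<in> path_edges p})"
    unfolding outs_def chi_def using assms by simp
  also have "{e\<in>E. fst e = v} \<inter> {e. e \<in> path_edges p} = {e\<in>path_edges p. fst e = v}"
    using assms by auto
  finally show ?thesis .
qed

lemma chi_conserve:
  assumes "finite E" "is_st_path V E s t p" "v \<noteq> s" "v \<noteq> t"
  shows "ins E (chi p) v = outs E (chi p) v"
proof -
  have d: "distinct p" "path_edges p \<subseteq> E" "hd p = s" "last p = t"
    using assms(2) unfolding is_st_path_def is_dpath_def by auto
  show ?thesis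
    unfolding sum_chi_in[OF assms(1) d(2)] sum_chi_out[OF assms(1) d(2)] card_in[OF d(1)] card_out[OF d(1)]
    using d assms by simp
qed

lemma chi_val:
  assumes "finite E" "is_st_path V E s t p" "s \<noteq> t"
  shows "outs E (chi p) s = 1"
  using assms sum_chi_out[OF assms(1)] card_out[of p s]
  unfolding is_st_path_def is_dpath_def by (auto simp: hd_in_set)




lemma walk_rtrancl:
  "xs \<noteq> [] \<Longrightarrow> path_edges xs \<subseteq> R \<Longrightarrow> y \<in> set xs \<Longrightarrow> (hd xs, y) \<in> R\<^sup>*"
proof (induction xs)
  case Nil then show ?case by simp
next
  case (Cons x xs)
  show ?case
  proof (cases "xs = []")
    case True then show ?thesis using Cons by simp
  next
    case False
    then have "(x, hd xs) \<in> R" using Cons.prems by (auto simp: path_edges_Cons)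
    moreover have "y = x \<or> (hd xs, y) \<in> R\<^sup>*" using Cons False by (auto simp: path_edges_Cons)
    ultimately show ?thesis by auto
  qed
qed

lemma rtrancl_path:
  assumes "(x, y) \<in> R\<^sup>*" "R \<subseteq> E" "E \<subseteq> V \<times> V" "y \<in> V" "\<forall>v. (v, v) \<notin> R\<^sup>+"
  shows "\<exists>ys. is_dpath V E ys \<and> hd ys = x \<and> last ys = y \<and> path_edges ys \<subseteq> R"
  using assms(1)
proof (induction rule: converse_rtrancl_induct)
  case base
  show ?case using assms by (rule_tac x="[y]" in exI) (auto simp: is_dpath_def path_edges_def)
next
  case (step u v)
  then obtain ys where ys: "is_dpath V E ys" "hd ys = v" "last ys = y" "path_edges ys \<subseteq> R" by blast
  have ne: "ys \<noteq> []" using ys unfolding is_dpath_def by auto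
  have "u \<notin> set ys"
  proof
    assume "u \<in> set ys"
    then have "(v, u) \<in> R\<^sup>*" using walk_rtrancl[OF ne ys(4)] ys(2) by auto
    then have "(u, u) \<in> R\<^sup>+" using step(1) by auto
    then show False using assms(5) by auto
  qed
  moreover have "u \<in> V" using step(1) assms(2,3) by auto
  ultimately show ?case using ys ne step(1) assms(2)
    by (rule_tac x="u # ys" in exI) (auto simp: is_dpath_def path_edges_Cons)
qed

locale dagf =
  fixes V :: "'v set" and E :: "'v edge set" and s t :: 'v
  assumes dag: "simple_dag V E" and sV: "s \<in> V" and tV: "t \<in> V" and st: "s \<noteq> t"
    and ex_path: "\<exists>p. is_st_path V E s t p"
begin

lemma finV: "finite V" and EV: "E \<subseteq> V \<times> V" and acyc: "\<And>v. (v, v) \<notin> E\<^sup>+"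
  using dag unfolding simple_dag_def by auto

lemma finE: "finite E"
  using finV EV by (meson finite_SigmaI finite_subset)

lemma st_E: "(s, t) \<in> E\<^sup>*"
proof -
  obtain p where p: "is_st_path V E s t p" using ex_path by blast
  then have "p \<noteq> []" "path_edges p \<subseteq> E" "hd p = s" "last p = t"
    unfolding is_st_path_def is_dpath_def by auto
  then show ?thesis using walk_rtrancl[of p E t] by auto
qed

lemma acycR: "R \<subseteq> E \<Longrightarrow> (v, v) \<notin> R\<^sup>+"
  using acyc trancl_mono by blast

lemma cut:
  assumes "X \<subseteq> V"
  shows "(\<Sum>v\<in>X. outs E f v - ins E f v) =
    (\<Sum>e\<in>{e\<in>E. fst e \<in> X \<and> snd e \<notin> X}. f e) - (\<Sum>e\<in>{e\<in>E. fst e \<notin> X \<and> snd e \<in> X}. f e)"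
proof -
  have fX: "finite X" using assms finV finite_subset by blast
  have o: "(\<Sum>v\<in>X. outs E f v) = (\<Sum>e\<in>{e\<in>E. fst e \<in> X}. f e)"
  proof -
    have "(\<Sum>e\<in>{e\<in>E. fst e \<in> X}. f e) = (\<Sum>v\<in>X. \<Sum>e\<in>{e\<in>{e\<in>E. fst e \<in> X}. fst e = v}. f e)"
      by (rule sum.group[symmetric]) (use fX finE in auto)
    also have "\<dots> = (\<Sum>v\<in>X. outs E f v)"
      unfolding outs_def by (rule sum.cong) (auto intro!: sum.cong)
    finally show ?thesis by simp
  qed
  have i: "(\<Sum>v\<in>X. ins E f v) = (\<Sum>e\<in>{e\<in>E. snd e \<in> X}. f e)"
  proof -
    have "(\<Sum>e\<in>{e\<in>E. snd e \<in> X}. f e) = (\<Sum>v\<in>X. \<Sum>e\<in>{e\<in>{e\<in>E. snd e \<in> X}. snd e = v}. f e)"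
      by (rule sum.group[symmetric]) (use fX finE in auto)
    also have "\<dots> = (\<Sum>v\<in>X. ins E f v)"
      unfolding ins_def by (rule sum.cong) (auto intro!: sum.cong)
    finally show ?thesis by simp
  qed
  have fin2: "finite {e\<in>E. fst e \<in> X}" "finite {e\<in>E. snd e \<in> X}" using finE by auto
  have o2: "(\<Sum>e\<in>{e\<in>E. fst e \<in> X}. f e) = (\<Sum>e\<in>{e\<in>E. fst e \<in> X \<and> snd e \<in> X}. f e)
      + (\<Sum>e\<in>{e\<in>E. fst e \<in> X \<and> snd e \<notin> X}. f e)"
    using sum.Int_Diff[OF fin2(1), of f "{e. snd e \<in> X}"]
    by (simp add: Int_def set_diff_eq conj_ac)
  have i2: "(\<Sum>e\<in>{e\<in>E. snd e \<in> X}. f e) = (\<Sum>e\<in>{e\<in>E. fst e \<in> X \<and> snd e \<in> X}. f e)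
      + (\<Sum>e\<in>{e\<in>E. fst e \<notin> X \<and> snd e \<in> X}. f e)"
    using sum.Int_Diff[OF fin2(2), of f "{e. fst e \<in> X}"]
    by (simp add: Int_def set_diff_eq conj_ac)
  show ?thesis using o i o2 i2 by (simp add: sum_subtractf)
qed


lemma fwd:
  assumes fl: "flowish V E s t f" and ab: "(a, b) \<in> E" "0 < f (a, b)"
  shows "(b, s) \<in> {e\<in>E. 0 < f e}\<^sup>* \<or> (b, t) \<in> {e\<in>E. 0 < f e}\<^sup>*"
proof (rule ccontr)
  let ?R = "{e\<in>E. 0 < f e}"
  define X where "X = {v\<in>V. (b, v) \<in> ?R\<^sup>*}"
  assume nn: "\<not> ?thesis"
  have XV: "X \<subseteq> V" unfolding X_def by auto
  have bV: "b \<in> V" using ab EV by auto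
  have "(\<Sum>v\<in>X. outs E f v - ins E f v) = 0"
  proof (intro sum.neutral ballI)
    fix v assume v: "v \<in> X"
    then have "v \<noteq> s" "v \<noteq> t" using nn unfolding X_def by auto
    then have "v \<in> V - {s, t}" using v XV by auto
    then have "ins E f v = outs E f v" using fl unfolding flowish_def by blast
    then show "outs E f v - ins E f v = 0" by simp
  qed
  moreover have "(\<Sum>e\<in>{e\<in>E. fst e \<in> X \<and> snd e \<notin> X}. f e) = 0"
  proof (intro sum.neutral ballI)
    fix e assume e: "e \<in> {e\<in>E. fst e \<in> X \<and> snd e \<notin> X}"
    show "f e = 0"
    proof (rule ccontr)
      assume "f e \<noteq> 0"
      then have "e \<in> ?R" using e fl unfolding flowish_def by force
      then have r: "(fst e, snd e) \<in> ?R" by simp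
      have "(b, fst e) \<in> ?R\<^sup>*" using e unfolding X_def by auto
      then have "(b, snd e) \<in> ?R\<^sup>*" using r by (rule rtrancl_into_rtrancl)
      moreover have "snd e \<in> V" using e EV by auto
      ultimately show False using e unfolding X_def by auto
    qed
  qed
  ultimately have z: "(\<Sum>e\<in>{e\<in>E. fst e \<notin> X \<and> snd e \<in> X}. f e) = 0"
    using cut[OF XV, of f] by simp
  have "a \<notin> X"
  proof
    assume "a \<in> X"
    then have "(b, a) \<in> ?R\<^sup>*" unfolding X_def by auto
    moreover have "(a, b) \<in> ?R" using ab by simp
    ultimately have "(b, b) \<in> ?R\<^sup>+" by (rule rtrancl_into_trancl1)
    then show False using acycR[of ?R b] by auto
  qed
  moreover have "b \<in> X" unfolding X_def using bV by auto
  ultimately have "(a, b) \<in> {e\<in>E. fst e \<notin> X \<and> snd e \<in> X}" using ab by auto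
  moreover have "\<forall>e\<in>{e\<in>E. fst e \<notin> X \<and> snd e \<in> X}. 0 \<le> f e" using fl unfolding flowish_def by auto
  moreover have "finite {e\<in>E. fst e \<notin> X \<and> snd e \<in> X}" using finE by simp
  ultimately have "f (a, b) = 0" using z sum_nonneg_eq_0_iff by blast
  then show False using ab by simp
qed

lemma bwd:
  assumes fl: "flowish V E s t f" and ab: "(a, b) \<in> E" "0 < f (a, b)"
  shows "(s, a) \<in> {e\<in>E. 0 < f e}\<^sup>* \<or> (t, a) \<in> {e\<in>E. 0 < f e}\<^sup>*"
proof (rule ccontr)
  let ?R = "{e\<in>E. 0 < f e}"
  define X where "X = {v\<in>V. (v, a) \<in> ?R\<^sup>*}"
  assume nn: "\<not> ?thesis"
  have XV: "X \<subseteq> V" unfolding X_def by auto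
  have aV: "a \<in> V" using ab EV by auto
  have "(\<Sum>v\<in>X. outs E f v - ins E f v) = 0"
  proof (intro sum.neutral ballI)
    fix v assume v: "v \<in> X"
    then have "v \<noteq> s" "v \<noteq> t" using nn unfolding X_def by auto
    then have "v \<in> V - {s, t}" using v XV by auto
    then have "ins E f v = outs E f v" using fl unfolding flowish_def by blast
    then show "outs E f v - ins E f v = 0" by simp
  qed
  moreover have "(\<Sum>e\<in>{e\<in>E. fst e \<notin> X \<and> snd e \<in> X}. f e) = 0"
  proof (intro sum.neutral ballI)
    fix e assume e: "e \<in> {e\<in>E. fst e \<notin> X \<and> snd e \<in> X}"
    show "f e = 0"
    proof (rule ccontr)
      assume "f e \<noteq> 0"
      then have "e \<in> ?R" using e fl unfolding flowish_def by force
      then have r: "(fst e, snd e) \<in> ?R" by simp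
      have "(snd e, a) \<in> ?R\<^sup>*" using e unfolding X_def by auto
      then have "(fst e, a) \<in> ?R\<^sup>*" using r by (meson converse_rtrancl_into_rtrancl)
      moreover have "fst e \<in> V" using e EV by auto
      ultimately show False using e unfolding X_def by auto
    qed
  qed
  ultimately have z: "(\<Sum>e\<in>{e\<in>E. fst e \<in> X \<and> snd e \<notin> X}. f e) = 0"
    using cut[OF XV, of f] by simp
  have "b \<notin> X"
  proof
    assume "b \<in> X"
    then have "(b, a) \<in> ?R\<^sup>*" unfolding X_def by auto
    moreover have "(a, b) \<in> ?R" using ab by simp
    ultimately have "(a, a) \<in> ?R\<^sup>+" by (meson rtrancl_into_trancl2)
    then show False using acycR[of ?R a] by auto
  qed
  moreover have "a \<in> X" unfolding X_def using aV by auto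
  ultimately have "(a, b) \<in> {e\<in>E. fst e \<in> X \<and> snd e \<notin> X}" using ab by auto
  moreover have "\<forall>e\<in>{e\<in>E. fst e \<in> X \<and> snd e \<notin> X}. 0 \<le> f e" using fl unfolding flowish_def by auto
  moreover have "finite {e\<in>E. fst e \<in> X \<and> snd e \<notin> X}" using finE by simp
  ultimately have "f (a, b) = 0" using z sum_nonneg_eq_0_iff by blast
  then show False using ab by simp
qed

lemma pos_out:
  assumes fl: "flowish V E s t f" and pos: "0 < outs E f s"
  shows "\<exists>c. (s, c) \<in> E \<and> 0 < f (s, c)"
proof (rule ccontr)
  assume "\<not> ?thesis"
  then have "\<forall>e\<in>{e\<in>E. fst e = s}. f e \<le> 0" by (metis (mono_tags) mem_Collect_eq not_less prod.collapse)
  then have "outs E f s \<le> 0" unfolding outs_def by (meson sum_nonpos)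
  then show False using pos by simp
qed

lemma zero_flow:
  assumes fl: "flowish V E s t f" and z: "outs E f s = 0"
  shows "f e = 0"
proof (rule ccontr)
  let ?R = "{e\<in>E. 0 < f e}"
  assume ne: "f e \<noteq> 0"
  then have eE: "e \<in> E" using fl unfolding flowish_def by metis
  then have pe: "0 < f e" using ne fl unfolding flowish_def by force
  obtain a b where e: "e = (a, b)" by force
  have eR: "(a, b) \<in> ?R" using eE pe e by auto
  have RE: "?R \<subseteq> E" by auto
  obtain x where x: "x \<in> {s, t}" "(b, x) \<in> ?R\<^sup>*" using fwd[OF fl, of a b] eE pe e by auto
  obtain y where y: "y \<in> {s, t}" "(y, a) \<in> ?R\<^sup>*" using bwd[OF fl, of a b] eE pe e by auto
  have "(y, b) \<in> ?R\<^sup>+" using y(2) eR by (rule rtrancl_into_trancl1)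
  then have yx: "(y, x) \<in> ?R\<^sup>+" using x(2) by (rule trancl_rtrancl_trancl)
  show False
  proof (cases "y = x")
    case True then show ?thesis using yx acycR[OF RE] by auto
  next
    case False
    then have "(y = s \<and> x = t) \<or> (y = t \<and> x = s)" using x y by auto
    then show ?thesis
    proof
      assume "y = s \<and> x = t"
      then obtain c where "(s, c) \<in> ?R" using yx by (meson tranclD)
      then have "0 < f (s, c)" "(s, c) \<in> E" by auto
      moreover have "0 < outs E f s"
      proof -
        have "f (s, c) \<le> outs E f s" unfolding outs_def
          using calculation fl finE unfolding flowish_def
          by (intro member_le_sum) auto
        then show ?thesis using calculation by simp
      qed
      ultimately show False using z by simp
    next
      assume "y = t \<and> x = s"
      then have "(t, s) \<in> E\<^sup>+" using yx trancl_mono[OF _ RE] by blast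
      then have "(s, s) \<in> E\<^sup>+" using st_E by auto
      then show False using acyc by auto
    qed
  qed
qed

lemma path_in_support:
  assumes fl: "flowish V E s t f" and pos: "0 < outs E f s"
  shows "\<exists>p. is_st_path V E s t p \<and> path_edges p \<subseteq> {e\<in>E. 0 < f e}"
proof -
  let ?R = "{e\<in>E. 0 < f e}"
  have RE: "?R \<subseteq> E" by auto
  obtain c where c: "(s, c) \<in> E" "0 < f (s, c)" using pos_out[OF fl pos] by auto
  have "(c, s) \<in> ?R\<^sup>* \<or> (c, t) \<in> ?R\<^sup>*" using fwd[OF fl c] .
  moreover have "(c, s) \<notin> ?R\<^sup>*"
  proof
    assume "(c, s) \<in> ?R\<^sup>*"
    moreover have "(s, c) \<in> ?R" using c by auto
    ultimately have "(s, s) \<in> ?R\<^sup>+" by (meson rtrancl_into_trancl2)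
    then show False using acycR[OF RE] by blast
  qed
  ultimately have "(c, t) \<in> ?R\<^sup>*" by auto
  moreover have "(s, c) \<in> ?R" using c by simp
  ultimately have "(s, t) \<in> ?R\<^sup>*" by (meson converse_rtrancl_into_rtrancl)
  moreover have "\<forall>v. (v, v) \<notin> ?R\<^sup>+" using acycR[OF RE] by blast
  ultimately have "\<exists>ys. is_dpath V E ys \<and> hd ys = s \<and> last ys = t \<and> path_edges ys \<subseteq> ?R"
    by (rule rtrancl_path[OF _ RE EV tV])
  then show ?thesis unfolding is_st_path_def by blast
qed

end



context dagf begin

definition SP where "SP = {q. is_st_path V E s t q}"

lemma finite_SP: "finite SP"
proof -
  have "SP \<subseteq> {xs. set xs \<subseteq> V \<and> length xs \<le> card V}"
  proof
    fix xs assume "xs \<in> SP"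
    then have "distinct xs" "set xs \<subseteq> V" unfolding SP_def is_st_path_def is_dpath_def by auto
    moreover have "length xs = card (set xs)" using distinct_card[OF \<open>distinct xs\<close>] by simp
    moreover have "card (set xs) \<le> card V" using card_mono[OF finV \<open>set xs \<subseteq> V\<close>] .
    ultimately show "xs \<in> {xs. set xs \<subseteq> V \<and> length xs \<le> card V}" by simp
  qed
  then show ?thesis using finite_lists_length_le[OF finV] finite_subset by blast
qed

lemma st_path_edge:
  assumes "is_st_path V E s t p"
  shows "path_edges p \<noteq> {}" "path_edges p \<subseteq> E"
proof -
  have p: "p \<noteq> []" "hd p = s" "last p = t" "path_edges p \<subseteq> E"
    using assms unfolding is_st_path_def is_dpath_def by auto
  show "path_edges p \<subseteq> E" using p by simp
  show "path_edges p \<noteq> {}"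
  proof (cases p)
    case Nil then show ?thesis using p by simp
  next
    case (Cons x xs)
    then have "xs \<noteq> []" using p st by auto
    then show ?thesis using Cons by (simp add: path_edges_Cons)
  qed
qed

lemma flowishD:
  assumes "flowish V E s t f"
  shows "\<And>e. e \<notin> E \<Longrightarrow> f e = 0" "\<And>e. e \<in> E \<Longrightarrow> 0 \<le> f e"
    "\<And>v. v \<in> V \<Longrightarrow> v \<noteq> s \<Longrightarrow> v \<noteq> t \<Longrightarrow> ins E f v = outs E f v"
  using assms unfolding flowish_def by auto

lemma outs_nonneg: "flowish V E s t f \<Longrightarrow> 0 \<le> outs E f v"
  unfolding outs_def by (auto intro: sum_nonneg flowishD(2))

lemma decomp:
  "flowish V E s t f \<Longrightarrow> \<exists>\<mu>. (\<forall>q. 0 \<le> \<mu> q) \<and> (\<forall>e. f e = (\<Sum>q\<in>SP. \<mu> q * chi q e)) \<and>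
     (\<Sum>q\<in>SP. \<mu> q) = outs E f s"
proof (induction "card {e\<in>E. f e \<noteq> 0}" arbitrary: f rule: less_induct)
  case less
  note fl = less.prems
  show ?case
  proof (cases "outs E f s = 0")
    case True
    then show ?thesis using zero_flow[OF fl] by (rule_tac x="\<lambda>_. 0" in exI) simp
  next
    case False
    then have pos: "0 < outs E f s" using outs_nonneg[OF fl, of s] by simp
    obtain p where p: "is_st_path V E s t p" "path_edges p \<subseteq> {e\<in>E. 0 < f e}"
      using path_in_support[OF fl pos] by blast
    have pSP: "p \<in> SP" using p unfolding SP_def by simp
    define PE where "PE = path_edges p"
    have PEne: "PE \<noteq> {}" and PEE: "PE \<subseteq> E" using st_path_edge[OF p(1)] PE_def by auto
    have finPE: "finite PE" unfolding PE_def by simp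
    define m where "m = Min (f ` PE)"
    have mpos: "0 < m" unfolding m_def using finPE PEne p(2) PE_def by (subst Min_gr_iff) auto
    have mle: "\<And>e. e \<in> PE \<Longrightarrow> m \<le> f e" unfolding m_def using finPE by simp
    have "m \<in> f ` PE" using Min_in[of "f ` PE"] finPE PEne unfolding m_def by blast
    then obtain e0 where e0: "e0 \<in> PE" "f e0 = m" by blast
    define f' where "f' = (\<lambda>e. f e - m * chi p e)"
    have chi0: "\<And>e. e \<notin> PE \<Longrightarrow> chi p e = 0" and chi1: "\<And>e. e \<in> PE \<Longrightarrow> chi p e = 1"
      unfolding chi_def PE_def by auto
    have insf': "\<And>v. ins E f' v = ins E f v - m * ins E (chi p) v"
      unfolding ins_def f'_def by (simp add: sum_subtractf sum_distrib_left)
    have outsf': "\<And>v. outs E f' v = outs E f v - m * outs E (chi p) v"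
      unfolding outs_def f'_def by (simp add: sum_subtractf sum_distrib_left)
    have fl': "flowish V E s t f'"
      unfolding flowish_def
    proof (intro conjI allI ballI impI)
      fix e assume "e \<notin> E"
      moreover have "e \<notin> PE" using PEE \<open>e \<notin> E\<close> by blast
      ultimately show "f' e = 0" using flowishD(1)[OF fl, of e] chi0[of e] unfolding f'_def by simp
    next
      fix e assume "e \<in> E"
      then show "0 \<le> f' e" using flowishD(2)[OF fl] mle chi0 chi1 unfolding f'_def
        by (cases "e \<in> PE") auto
    next
      fix v assume v: "v \<in> V - {s, t}"
      have "ins E (chi p) v = outs E (chi p) v" using chi_conserve[OF finE p(1)] v by auto
      then show "ins E f' v = outs E f' v" unfolding insf' outsf' using flowishD(3)[OF fl] v by auto
    qed
    have sub: "{e\<in>E. f' e \<noteq> 0} \<subset> {e\<in>E. f e \<noteq> 0}"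
    proof
      show "{e\<in>E. f' e \<noteq> 0} \<subseteq> {e\<in>E. f e \<noteq> 0}"
      proof
        fix e assume e: "e \<in> {e\<in>E. f' e \<noteq> 0}"
        show "e \<in> {e\<in>E. f e \<noteq> 0}"
        proof (cases "e \<in> PE")
          case True then show ?thesis using p(2) e PE_def by auto
        next
          case False then show ?thesis using e chi0 unfolding f'_def by auto
        qed
      qed
      have "e0 \<in> {e\<in>E. f e \<noteq> 0}" using e0 mpos PEE by auto
      moreover have "e0 \<notin> {e\<in>E. f' e \<noteq> 0}" using e0 chi1 unfolding f'_def by auto
      ultimately show "{e\<in>E. f' e \<noteq> 0} \<noteq> {e\<in>E. f e \<noteq> 0}" by blast
    qed
    have "card {e\<in>E. f' e \<noteq> 0} < card {e\<in>E. f e \<noteq> 0}"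
      using sub finE by (intro psubset_card_mono) auto
    from less.hyps[OF this fl'] obtain \<mu>' where
      mu': "\<forall>q. 0 \<le> \<mu>' q" "\<forall>e. f' e = (\<Sum>q\<in>SP. \<mu>' q * chi q e)" "(\<Sum>q\<in>SP. \<mu>' q) = outs E f' s"
      by blast
    define \<mu> where "\<mu> = (\<lambda>q. \<mu>' q + (if q = p then m else 0))"
    have "\<forall>q. 0 \<le> \<mu> q" using mu'(1) mpos unfolding \<mu>_def by auto
    moreover have "\<forall>e. f e = (\<Sum>q\<in>SP. \<mu> q * chi q e)"
    proof
      fix e
      have "(\<Sum>q\<in>SP. \<mu> q * chi q e) = (\<Sum>q\<in>SP. \<mu>' q * chi q e + (if q = p then m * chi q e else 0))"
        unfolding \<mu>_def by (intro sum.cong) (auto simp: algebra_simps)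
      also have "\<dots> = (\<Sum>q\<in>SP. \<mu>' q * chi q e) + m * chi p e"
        using finite_SP pSP by (simp add: sum.distrib)
      also have "\<dots> = f e" using spec[OF mu'(2), of e] unfolding f'_def by simp
      finally show "f e = (\<Sum>q\<in>SP. \<mu> q * chi q e)" by simp
    qed
    moreover have "(\<Sum>q\<in>SP. \<mu> q) = outs E f s"
    proof -
      have "(\<Sum>q\<in>SP. \<mu> q) = (\<Sum>q\<in>SP. \<mu>' q) + m"
        unfolding \<mu>_def using finite_SP pSP by (simp add: sum.distrib)
      also have "\<dots> = outs E f s" using mu'(3) outsf' chi_val[OF finE p(1) st] by simp
      finally show ?thesis .
    qed
    ultimately show ?thesis by blast
  qed
qed

end



lemma T_concave:
  fixes Q :: "'a set" and c :: "'a \<Rightarrow> real" and G :: "'a \<Rightarrow> 'v flowvec"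
  assumes fin: "finite Q" and c0: "\<forall>q\<in>Q. 0 \<le> c q" and c1: "(\<Sum>q\<in>Q. c q) = 1"
    and GC: "\<forall>q\<in>Q. \<forall>e\<in>E. G q e \<le> C e"
    and fG: "\<forall>e\<in>E. f e \<le> (\<Sum>q\<in>Q. c q * G q e)"
    and lam0: "\<forall>i<k. 0 \<le> lam i"
  shows "(\<Sum>q\<in>Q. c q * T_val E C k p lam (G q)) \<le> T_val E C k p lam f"
proof -
  define feas where "feas g lt \<longleftrightarrow> (\<forall>e\<in>E. (\<Sum>i\<in>{i. i < k \<and> e \<in> path_edges (p i)}. lt i) \<le> C e - g e) \<and>
      (\<forall>i<k. 0 \<le> lt i \<and> lt i \<le> lam i)" for g :: "'v flowvec" and lt :: "nat \<Rightarrow> real"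
  define S where "S g = {(\<Sum>i<k. lt i) | lt. feas g lt}" for g
  have T: "T_val E C k p lam g = Sup (S g)" for g unfolding T_val_def S_def feas_def by simp
  have bdd: "bdd_above (S g)" for g
  proof (rule bdd_aboveI)
    fix x assume "x \<in> S g"
    then obtain lt where "x = (\<Sum>i<k. lt i)" "feas g lt" unfolding S_def by blast
    then show "x \<le> (\<Sum>i<k. lam i)" unfolding feas_def by (auto intro: sum_mono)
  qed
  have ne: "S (G q) \<noteq> {}" if "q \<in> Q" for q
  proof -
    have "feas (G q) (\<lambda>_. 0)" unfolding feas_def using GC that lam0 by auto
    then show ?thesis unfolding S_def by blast
  qed
  show ?thesis
  proof (rule field_le_epsilon)
    fix eps :: real assume eps: "0 < eps"
    have "\<forall>q\<in>Q. \<exists>lt. feas (G q) lt \<and> T_val E C k p lam (G q) - eps < (\<Sum>i<k. lt i)"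
    proof
      fix q assume q: "q \<in> Q"
      have "T_val E C k p lam (G q) - eps < Sup (S (G q))" using eps T by simp
      then obtain x where "x \<in> S (G q)" "T_val E C k p lam (G q) - eps < x"
        using less_cSupD[OF ne[OF q]] by blast
      then show "\<exists>lt. feas (G q) lt \<and> T_val E C k p lam (G q) - eps < (\<Sum>i<k. lt i)"
        unfolding S_def by blast
    qed
    then obtain L where L: "\<And>q. q \<in> Q \<Longrightarrow> feas (G q) (L q)"
      "\<And>q. q \<in> Q \<Longrightarrow> T_val E C k p lam (G q) - eps < (\<Sum>i<k. L q i)"
      using bchoice by metis
    define lt where "lt i = (\<Sum>q\<in>Q. c q * L q i)" for i
    have "feas f lt" unfolding feas_def
    proof (intro conjI ballI allI impI)
      fix e assume e: "e \<in> E"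
      have "(\<Sum>i\<in>{i. i < k \<and> e \<in> path_edges (p i)}. lt i) =
          (\<Sum>q\<in>Q. c q * (\<Sum>i\<in>{i. i < k \<and> e \<in> path_edges (p i)}. L q i))"
        unfolding lt_def by (simp add: sum_distrib_left sum.swap[of _ Q])
      also have "\<dots> \<le> (\<Sum>q\<in>Q. c q * (C e - G q e))"
        using L(1) c0 e unfolding feas_def by (intro sum_mono mult_left_mono) auto
      also have "\<dots> = C e - (\<Sum>q\<in>Q. c q * G q e)"
        using c1 by (simp add: algebra_simps sum_subtractf sum_distrib_left[symmetric] sum_distrib_right[symmetric])
      also have "\<dots> \<le> C e - f e" using fG e by simp
      finally show "(\<Sum>i\<in>{i. i < k \<and> e \<in> path_edges (p i)}. lt i) \<le> C e - f e" .
    next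
      fix i assume i: "i < k"
      show "0 \<le> lt i" unfolding lt_def using L(1) c0 i unfolding feas_def
        by (intro sum_nonneg mult_nonneg_nonneg) auto
      have "lt i \<le> (\<Sum>q\<in>Q. c q * lam i)" unfolding lt_def using L(1) c0 i unfolding feas_def
        by (intro sum_mono mult_left_mono) auto
      also have "\<dots> = lam i" using c1 by (simp add: sum_distrib_right[symmetric])
      finally show "lt i \<le> lam i" .
    qed
    then have "(\<Sum>i<k. lt i) \<in> S f" unfolding S_def by blast
    then have up: "(\<Sum>i<k. lt i) \<le> T_val E C k p lam f" unfolding T using bdd by (rule cSup_upper)
    have "(\<Sum>q\<in>Q. c q * T_val E C k p lam (G q)) - eps = (\<Sum>q\<in>Q. c q * (T_val E C k p lam (G q) - eps))"
      using c1 by (simp add: algebra_simps sum_subtractf sum_distrib_left[symmetric] sum_distrib_right[symmetric])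
    also have "\<dots> \<le> (\<Sum>q\<in>Q. c q * (\<Sum>i<k. L q i))"
      using L(2) c0 by (intro sum_mono mult_left_mono) (auto intro: less_imp_le)
    also have "\<dots> = (\<Sum>i<k. lt i)" unfolding lt_def by (simp add: sum_distrib_left sum.swap[of _ Q])
    finally show "(\<Sum>q\<in>Q. c q * T_val E C k p lam (G q)) \<le> T_val E C k p lam f + eps"
      using up by simp
  qed
qed

lemma Lambda_convex:
  fixes Q :: "'a set" and c :: "'a \<Rightarrow> real" and G :: "'a \<Rightarrow> 'v flowvec"
  assumes fin: "finite Q" and c0: "\<forall>q\<in>Q. 0 \<le> c q" and c1: "(\<Sum>q\<in>Q. c q) = 1"
    and GC: "\<forall>q\<in>Q. \<forall>e\<in>E. G q e \<le> C e"
    and fG: "\<forall>e\<in>E. f e \<le> (\<Sum>q\<in>Q. c q * G q e)"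
    and lam0: "\<forall>i<k. 0 \<le> lam i"
  shows "Lambda_flow E C k p lam f \<le> (\<Sum>q\<in>Q. c q * Lambda_flow E C k p lam (G q))"
proof -
  have "(\<Sum>q\<in>Q. c q * Lambda_flow E C k p lam (G q)) =
     (\<Sum>i<k. lam i) - (\<Sum>q\<in>Q. c q * T_val E C k p lam (G q))"
    unfolding Lambda_flow_def using c1
    by (simp add: algebra_simps sum_subtractf sum_distrib_left[symmetric] sum_distrib_right[symmetric])
  then show ?thesis using T_concave[OF assms] unfolding Lambda_flow_def by simp
qed

lemma push:
  fixes a :: "'i \<Rightarrow> real" and G :: "'i \<Rightarrow> 'b"
  assumes fin: "finite I" and a0: "\<forall>i\<in>I. 0 \<le> a i" and a1: "sum a I = 1" and GS: "G ` I \<subseteq> S"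
  defines "d \<equiv> \<lambda>g. \<Sum>i\<in>{i\<in>I. G i = g}. a i"
  shows "fin_distr_on d S" "\<And>h. (\<Sum>g\<in>{g. d g \<noteq> 0}. d g * h g) = (\<Sum>i\<in>I. a i * h (G i))"
proof -
  have supp: "{g. d g \<noteq> 0} \<subseteq> G ` I"
  proof
    fix g assume "g \<in> {g. d g \<noteq> 0}"
    then have "{i\<in>I. G i = g} \<noteq> {}" unfolding d_def by force
    then show "g \<in> G ` I" by blast
  qed
  have finsupp: "finite {g. d g \<noteq> 0}" using supp fin finite_subset by blast
  have eq: "(\<Sum>g\<in>{g. d g \<noteq> 0}. d g * h g) = (\<Sum>i\<in>I. a i * h (G i))" for h
  proof -
    have "(\<Sum>i\<in>I. a i * h (G i)) = (\<Sum>g\<in>G ` I. \<Sum>i\<in>{i\<in>I. G i = g}. a i * h (G i))"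
      using sum.image_gen[OF fin, of "\<lambda>i. a i * h (G i)" G] by simp
    also have "\<dots> = (\<Sum>g\<in>G ` I. d g * h g)"
      unfolding d_def by (intro sum.cong refl) (simp add: sum_distrib_right)
    also have "\<dots> = (\<Sum>g\<in>{g. d g \<noteq> 0}. d g * h g)"
      using supp fin by (intro sum.mono_neutral_right) auto
    finally show ?thesis by simp
  qed
  then show "\<And>h. (\<Sum>g\<in>{g. d g \<noteq> 0}. d g * h g) = (\<Sum>i\<in>I. a i * h (G i))" .
  show "fin_distr_on d S" unfolding fin_distr_on_def
  proof (intro conjI allI)
    show "finite {g. d g \<noteq> 0}" by (rule finsupp)
    show "0 \<le> d g" for g unfolding d_def using a0 by (auto intro: sum_nonneg)
    show "{g. d g \<noteq> 0} \<subseteq> S" using supp GS by blast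
    show "(\<Sum>g\<in>{g. d g \<noteq> 0}. d g) = 1" using eq[of "\<lambda>_. 1"] a1 by simp
  qed
qed




context dagf begin

lemma st_flow_flowish: "is_st_flow V E C s t f \<Longrightarrow> flowish V E s t f"
  unfolding is_st_flow_def flowish_def ins_def outs_def by blast

lemma per_flow:
  assumes Cg: "\<forall>e\<in>E. \<gamma> \<le> C e" and g0: "0 < \<gamma>" and f: "f \<in> flows_le V E C s t \<gamma>"
  shows "\<exists>(Q :: 'v list set) c G. finite Q \<and> (\<forall>q\<in>Q. 0 \<le> c q) \<and> (\<Sum>q\<in>Q. c q) = 1 \<and>
    G ` Q \<subseteq> (flows_le V E C s t \<gamma> \<inter> {g. single_path_flow V E C s t g}) \<and>
    (\<forall>k p lam. user_paths V E C k p lam \<longrightarrow>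
       Lambda_flow E C k p lam f \<le> (\<Sum>q\<in>Q. c q * Lambda_flow E C k p lam (G q)))"
proof -
  have stf: "is_st_flow V E C s t f" and vg: "flow_val E s f \<le> \<gamma>" using f unfolding flows_le_def by auto
  have fl: "flowish V E s t f" using st_flow_flowish[OF stf] .
  have val: "flow_val E s f = outs E f s" unfolding flow_val_def outs_def by simp
  obtain \<mu> where mu: "\<forall>q. 0 \<le> \<mu> q" "\<forall>e. f e = (\<Sum>q\<in>SP. \<mu> q * chi q e)" "(\<Sum>q\<in>SP. \<mu> q) = outs E f s"
    using decomp[OF fl] by blast
  obtain p0 where p0: "is_st_path V E s t p0" using ex_path by blast
  show ?thesis
  proof (cases "outs E f s = 0")
    case True
    have f0: "f e = 0" for e using zero_flow[OF fl True] .
    have "single_path_flow V E C s t f" unfolding single_path_flow_def using stf p0 f0 by auto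
    then show ?thesis using f
      by (rule_tac x="{p0}" in exI, rule_tac x="\<lambda>_. 1" in exI, rule_tac x="\<lambda>_. f" in exI) simp
  next
    case False
    define v where "v = outs E f s"
    have vpos: "0 < v" using False outs_nonneg[OF fl, of s] unfolding v_def by simp
    have vle: "v \<le> \<gamma>" using vg val unfolding v_def by simp
    define c where "c q = \<mu> q / v" for q :: "'v list"
    define G where "G q = (\<lambda>e::'v edge. v * chi q e)" for q :: "'v list"
    have c0: "\<forall>q\<in>SP. 0 \<le> c q" using mu(1) vpos unfolding c_def by simp
    have c1: "(\<Sum>q\<in>SP. c q) = 1" unfolding c_def using mu(3) vpos
      by (simp add: sum_divide_distrib[symmetric] v_def)
    have chi01: "chi q e = 0 \<or> chi q e = 1" for q e unfolding chi_def by simp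
    have GC: "\<forall>q\<in>SP. \<forall>e\<in>E. G q e \<le> C e"
    proof (intro ballI)
      fix q e assume "q \<in> SP" "e \<in> E"
      then show "G q e \<le> C e" unfolding G_def using chi01[of q e] vle vpos Cg by auto
    qed
    have fG: "\<forall>e\<in>E. f e \<le> (\<Sum>q\<in>SP. c q * G q e)"
    proof
      fix e
      have "(\<Sum>q\<in>SP. c q * G q e) = (\<Sum>q\<in>SP. \<mu> q * chi q e)"
        unfolding c_def G_def using vpos by (intro sum.cong) auto
      then show "f e \<le> (\<Sum>q\<in>SP. c q * G q e)" using spec[OF mu(2), of e] by simp
    qed
    have Gin: "G q \<in> flows_le V E C s t \<gamma> \<inter> {g. single_path_flow V E C s t g}" if q: "q \<in> SP" for q
    proof -
      have qp: "is_st_path V E s t q" using q unfolding SP_def by simp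
      have qE: "path_edges q \<subseteq> E" using st_path_edge[OF qp] by simp
      have st_fl: "is_st_flow V E C s t (G q)" unfolding is_st_flow_def
      proof (intro conjI allI impI ballI)
        fix e assume "e \<notin> E"
        then have "e \<notin> path_edges q" using qE by blast
        then show "G q e = 0" unfolding G_def chi_def by simp
      next
        fix e assume e: "e \<in> E"
        show "0 \<le> G q e" unfolding G_def chi_def using vpos by simp
        show "G q e \<le> C e" using GC q e by blast
      next
        fix w assume w: "w \<in> V - {s, t}"
        have "ins E (G q) w = outs E (G q) w"
          unfolding G_def ins_def outs_def
          using chi_conserve[OF finE qp, of w] w
          by (simp add: sum_distrib_left[symmetric] ins_def outs_def)
        then show "(\<Sum>e\<in>{e\<in>E. snd e = w}. G q e) = (\<Sum>e\<in>{e\<in>E. fst e = w}. G q e)"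
          unfolding ins_def outs_def .
      qed
      have "flow_val E s (G q) = v * outs E (chi q) s"
        unfolding flow_val_def outs_def G_def by (simp add: sum_distrib_left)
      then have "flow_val E s (G q) = v" using chi_val[OF finE qp st] by simp
      then have "G q \<in> flows_le V E C s t \<gamma>" using st_fl vle unfolding flows_le_def by simp
      moreover have "single_path_flow V E C s t (G q)" unfolding single_path_flow_def
      proof (intro conjI exI[of _ q])
        show "is_st_flow V E C s t (G q)" by (rule st_fl)
        show "is_st_path V E s t q" by (rule qp)
        show "\<forall>e. 0 < G q e \<longrightarrow> e \<in> path_edges q" unfolding G_def chi_def by auto
      qed
      ultimately show ?thesis by simp
    qed
    show ?thesis
    proof (rule exI[of _ SP], rule exI[of _ c], rule exI[of _ G], intro conjI allI impI)
      show "finite SP" by (rule finite_SP)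
      show "\<forall>q\<in>SP. 0 \<le> c q" by (rule c0)
      show "(\<Sum>q\<in>SP. c q) = 1" by (rule c1)
      show "G ` SP \<subseteq> flows_le V E C s t \<gamma> \<inter> {g. single_path_flow V E C s t g}" using Gin by blast
      fix k p lam assume "user_paths V E C k p lam"
      then have "\<forall>i<k. 0 \<le> lam i" unfolding user_paths_def by auto
      then show "Lambda_flow E C k p lam f \<le> (\<Sum>q\<in>SP. c q * Lambda_flow E C k p lam (G q))"
        using Lambda_convex[OF finite_SP c0 c1 GC fG] by blast
    qed
  qed
qed

end

theorem proposition1:
  fixes V :: "'v set" and E :: "'v edge set" and C :: "'v edge \<Rightarrow> real"
    and s t :: 'v and \<gamma> :: real and w :: "'v flowvec \<Rightarrow> real"
  assumes "simple_dag V E"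
    and "\<forall>e\<in>E. 0 \<le> C e"
    and "s \<in> V" and "t \<in> V" and "s \<noteq> t"
    and "\<exists>p. is_st_path V E s t p"
    and "0 < \<gamma>" and "\<forall>e\<in>E. \<gamma> \<le> C e"
    and "interdiction_strategy V E C s t \<gamma> w"
  shows "\<exists>w'. fin_distr_on w' (flows_le V E C s t \<gamma> \<inter> {f. single_path_flow V E C s t f}) \<and>
    (\<forall>k p lam. user_paths V E C k p lam \<longrightarrow>
       Lambda_strat E C k p lam w' \<ge> Lambda_strat E C k p lam w)"
proof -
  interpret dagf V E s t using assms(1,3,4,5,6) by unfold_locales
  define W where "W = {f. w f \<noteq> 0}"
  define S where "S = flows_le V E C s t \<gamma> \<inter> {f. single_path_flow V E C s t f}"
  have wd: "fin_distr_on w (flows_le V E C s t \<gamma>)" using assms(9) unfolding interdiction_strategy_def .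
  have finW: "finite W" and w0: "\<forall>f. 0 \<le> w f" and WF: "W \<subseteq> flows_le V E C s t \<gamma>" and w1: "sum w W = 1"
    using wd unfolding fin_distr_on_def W_def by auto
  have "\<forall>f\<in>W. \<exists>(Q :: 'v list set) c G. finite Q \<and> (\<forall>q\<in>Q. 0 \<le> c q) \<and> (\<Sum>q\<in>Q. c q) = 1 \<and>
    G ` Q \<subseteq> S \<and> (\<forall>k p lam. user_paths V E C k p lam \<longrightarrow>
       Lambda_flow E C k p lam f \<le> (\<Sum>q\<in>Q. c q * Lambda_flow E C k p lam (G q)))"
  proof
    fix f assume "f \<in> W"
    then have "f \<in> flows_le V E C s t \<gamma>" using WF by blast
    from per_flow[OF assms(8,7) this] show "\<exists>(Q :: 'v list set) c G. finite Q \<and> (\<forall>q\<in>Q. 0 \<le> c q) \<and> (\<Sum>q\<in>Q. c q) = 1 \<and>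
    G ` Q \<subseteq> S \<and> (\<forall>k p lam. user_paths V E C k p lam \<longrightarrow>
       Lambda_flow E C k p lam f \<le> (\<Sum>q\<in>Q. c q * Lambda_flow E C k p lam (G q)))"
      unfolding S_def .
  qed
  from bchoice[OF this] obtain QQ :: "'v flowvec \<Rightarrow> 'v list set" where "\<forall>f\<in>W. \<exists>c G. finite (QQ f) \<and> (\<forall>q\<in>QQ f. 0 \<le> c q) \<and> (\<Sum>q\<in>QQ f. c q) = 1 \<and>
    G ` (QQ f) \<subseteq> S \<and> (\<forall>k p lam. user_paths V E C k p lam \<longrightarrow>
       Lambda_flow E C k p lam f \<le> (\<Sum>q\<in>QQ f. c q * Lambda_flow E C k p lam (G q)))"
    by (elim exE) (erule that)
  from bchoice[OF this] obtain cc :: "'v flowvec \<Rightarrow> 'v list \<Rightarrow> real" where "\<forall>f\<in>W. \<exists>G. finite (QQ f) \<and> (\<forall>q\<in>QQ f. 0 \<le> cc f q) \<and> (\<Sum>q\<in>QQ f. cc f q) = 1 \<and>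
    G ` (QQ f) \<subseteq> S \<and> (\<forall>k p lam. user_paths V E C k p lam \<longrightarrow>
       Lambda_flow E C k p lam f \<le> (\<Sum>q\<in>QQ f. cc f q * Lambda_flow E C k p lam (G q)))"
    by (elim exE) (erule that)
  from bchoice[OF this] obtain GG :: "'v flowvec \<Rightarrow> 'v list \<Rightarrow> 'v flowvec" where GG: "\<forall>f\<in>W. finite (QQ f) \<and> (\<forall>q\<in>QQ f. 0 \<le> cc f q) \<and> (\<Sum>q\<in>QQ f. cc f q) = 1 \<and>
    GG f ` (QQ f) \<subseteq> S \<and> (\<forall>k p lam. user_paths V E C k p lam \<longrightarrow>
       Lambda_flow E C k p lam f \<le> (\<Sum>q\<in>QQ f. cc f q * Lambda_flow E C k p lam (GG f q)))"
    by (elim exE) (erule that)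
  define I where "I = Sigma W QQ"
  define a where "a = (\<lambda>(f, q). w f * cc f q)"
  define G' where "G' = (\<lambda>(f, q). GG f q)"
  have finI: "finite I" unfolding I_def using finW GG by (intro finite_SigmaI) auto
  have a0: "\<forall>i\<in>I. 0 \<le> a i" unfolding I_def a_def using GG w0 by auto
  have sumI: "(\<Sum>i\<in>I. a i * h (G' i)) = (\<Sum>f\<in>W. w f * (\<Sum>q\<in>QQ f. cc f q * h (GG f q)))" for h
  proof -
    have "(\<Sum>i\<in>I. a i * h (G' i)) = (\<Sum>(f,q)\<in>I. w f * cc f q * h (GG f q))"
      unfolding a_def G'_def by (intro sum.cong) auto
    also have "\<dots> = (\<Sum>f\<in>W. \<Sum>q\<in>QQ f. w f * cc f q * h (GG f q))"
      unfolding I_def using finW GG by (subst sum.Sigma) auto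
    also have "\<dots> = (\<Sum>f\<in>W. w f * (\<Sum>q\<in>QQ f. cc f q * h (GG f q)))"
      by (simp add: sum_distrib_left mult.assoc)
    finally show ?thesis .
  qed
  have a1: "sum a I = 1"
  proof -
    have "sum a I = (\<Sum>i\<in>I. a i * (\<lambda>_. 1::real) (G' i))" by simp
    also have "\<dots> = (\<Sum>f\<in>W. w f * (\<Sum>q\<in>QQ f. cc f q * 1))" by (rule sumI)
    also have "\<dots> = (\<Sum>f\<in>W. w f)" using GG by (intro sum.cong) auto
    finally show ?thesis using w1 by simp
  qed
  have GS: "G' ` I \<subseteq> S" unfolding I_def G'_def using GG by auto
  define d where "d = (\<lambda>g. \<Sum>i\<in>{i\<in>I. G' i = g}. a i)"
  have dd: "fin_distr_on d S" using push(1)[OF finI a0 a1 GS] unfolding d_def .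
  have dh: "\<And>h. (\<Sum>g\<in>{g. d g \<noteq> 0}. d g * h g) = (\<Sum>i\<in>I. a i * h (G' i))"
    using push(2)[OF finI a0 a1 GS] unfolding d_def .
  show ?thesis
  proof (rule exI[of _ d], intro conjI allI impI)
    show "fin_distr_on d (flows_le V E C s t \<gamma> \<inter> {f. single_path_flow V E C s t f})"
      using dd unfolding S_def .
    fix k p lam assume up: "user_paths V E C k p lam"
    have "Lambda_strat E C k p lam w = (\<Sum>f\<in>W. w f * Lambda_flow E C k p lam f)"
      unfolding Lambda_strat_def W_def ..
    also have "\<dots> \<le> (\<Sum>f\<in>W. w f * (\<Sum>q\<in>QQ f. cc f q * Lambda_flow E C k p lam (GG f q)))"
      using GG up w0 by (intro sum_mono mult_left_mono) auto
    also have "\<dots> = (\<Sum>i\<in>I. a i * Lambda_flow E C k p lam (G' i))" by (rule sumI[symmetric])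
    also have "\<dots> = Lambda_strat E C k p lam d" unfolding Lambda_strat_def dh ..
    finally show "Lambda_strat E C k p lam w \<le> Lambda_strat E C k p lam d" .
  qed
qed


end
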